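(* Let $\beta$ be an ordered partition of $N$. For every $x\in X^\beta$ we have $\bar W^{\beta(x)}x\subseteq W^\beta$, and the map $\bigsqcup_{x\in X^\beta}\bar W^{\beta(x)}\to W^\beta$, $w\mapsto wx$ (for $w$ in the copy indexed by $x$), is a bijection.
   Context: Fix $N\ge2$. $\bar P=\bigoplus_{i=1}^N\mathbb Z\epsilon_i$ with $(\epsilon_i,\epsilon_j)=\delta_{ij}$; $\bar R=\{\alpha_{ij}=\epsilon_i-\epsilon_j:i\ne j\}$, $\bar R_+=\{\alpha_{ij}:i<j\}$, $\alpha_i=\alpha_{i,i+1}$, $\bar\Pi=\{\alpha_1,\dots,\alpha_{N-1}\}$; $\bar P_-=\{\eta\in\bar P:(\eta,\alpha)\le0\ \forall\alpha\in\bar R_+\}$. $\bar W=\mathfrak S_N$ acts by permuting indices; $W=\bar W\ltimes\bar P$ with elements $wt_\eta$, $wt_\eta w^{-1}=t_{w(\eta)}$. Affine roots (with formal $\delta$): $R=\{\bar\alpha+k\delta:\bar\alpha\in\bar R,k\in\mathbb Z\}$, $R_+=\{\bar\alpha+k\delta:\bar\alpha\in\bar R_+,k\ge0\}\cup\{-\bar\alpha+k\delta:\bar\alpha\in\bar R_+,k>0\}$, $R_-=R\setminus R_+$; $W$ acts on $R$ by $w(\bar\alpha+k\delta)=w(\bar\alpha)+k\delta$, $t_\eta(\bar\alpha+k\delta)=\bar\alpha+(k-(\eta,\bar\alpha))\delta$; $l(w)=\#(R_+\cap w^{-1}(R_-))$. An ordered partition $\gamma$ of $N$ gives blocks of consecutive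 indices of sizes $\gamma_1,\dots,\gamma_r$; $\bar R_\gamma=\{\alpha_{ij}:i,j\text{ in the same block}\}$, $\bar R_{\gamma,+}=\bar R_\gamma\cap\bar R_+$, $\bar\Pi_\gamma=\bar\Pi\cap\bar R_\gamma$, $\bar W_\gamma$ generated by $s_\alpha$, $\alpha\in\bar\Pi_\gamma$; $W^\gamma=\{w\in W:l(wu)\ge l(w)\ \forall u\in\bar W_\gamma\}$, $\bar W^\gamma=W^\gamma\cap\bar W$. For $w\in W$, $\beta(w)$ denotes the ordered partition of $N$ with $\bar\Pi_{\beta(w)}=\bar\Pi\cap w(\bar R_{\beta,+})$. For $w\in\bar W^\beta$, $\eta_w\in\bar P_-$ is defined by $(\eta_w,\epsilon_1)=0$ and $(\eta_w,\alpha_i)=-1$ if $\alpha_i\in w(\bar R_+\setminus\bar R_{\beta,+})$, $0$ otherwise; $\bar P_-(w)=\{\eta+\eta_w:\eta\in\bar P_-\}$; $X^\beta=\{t_\eta w:w\in\bar W^\beta,\eta\in\bar P_-(w)\}$. *)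

theory Defs
  imports "HOL-Combinatorics.Permutations"
begin

(* Indices are 1..N.  A weight eta in Pbar = Z^N is a function nat => int vanishing outside {1..N};
   a permutation w in Wbar = S_N is a function nat => nat with  w permutes {1..N}.
   An element of the extended affine Weyl group W = Wbar |x Pbar is represented by the pair
   (eta, w), standing for  t_eta w.
   An affine root eps_i - eps_j + k delta is represented by the triple (i, j, k). *)

type_synonym weight = "nat \<Rightarrow> int"
type_synonym perm = "nat \<Rightarrow> nat"
type_synonym welt = "weight \<times> perm"
type_synonym aroot = "nat \<times> nat \<times> int"

definition Pbar :: "nat \<Rightarrow> weight set" where
  "Pbar N = {eta. \<forall>i. i \<notin> {1..N} \<longrightarrow> eta i = 0}"

definition Wbar :: "nat \<Rightarrow> perm set" where
  "Wbar N = {w. w permutes {1..N}}"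

definition Wgrp :: "nat \<Rightarrow> welt set" where
  "Wgrp N = {(eta, w). eta \<in> Pbar N \<and> w \<in> Wbar N}"

definition emb :: "perm \<Rightarrow> welt" where
  "emb w = ((\<lambda>_. 0), w)"

(* action of a permutation on weights: w(sum mu_i eps_i) = sum mu_i eps_{w i} *)
definition wact :: "perm \<Rightarrow> weight \<Rightarrow> weight" where
  "wact w mu = (\<lambda>j. mu (inv w j))"

(* product  (t_eta w)(t_mu v) = t_{eta + w(mu)} (w v) *)
definition wmult :: "welt \<Rightarrow> welt \<Rightarrow> welt" where
  "wmult x y = (case x of (eta, w) \<Rightarrow> case y of (mu, v) \<Rightarrow>
      ((\<lambda>j. eta j + wact w mu j), w \<circ> v))"

definition Rroots :: "nat \<Rightarrow> aroot set" where
  "Rroots N = {(i, j, k). i \<in> {1..N} \<and> j \<in> {1..N} \<and> i \<noteq> j}"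

definition Rplus :: "nat \<Rightarrow> aroot set" where
  "Rplus N = {(i, j, k) \<in> Rroots N. (i < j \<and> k \<ge> 0) \<or> (j < i \<and> k > 0)}"

definition Rminus :: "nat \<Rightarrow> aroot set" where
  "Rminus N = Rroots N - Rplus N"

(* (t_eta w)(alpha_ij + k delta) = alpha_{w i, w j} + (k - (eta, alpha_{w i, w j})) delta *)
definition ract :: "welt \<Rightarrow> aroot \<Rightarrow> aroot" where
  "ract x a = (case x of (eta, w) \<Rightarrow> case a of (i, j, k) \<Rightarrow>
      (w i, w j, k - (eta (w i) - eta (w j))))"

definition len :: "nat \<Rightarrow> welt \<Rightarrow> nat" where
  "len N x = card {a \<in> Rplus N. ract x a \<in> Rminus N}"

definition Rbar :: "nat \<Rightarrow> aroot set" where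
  "Rbar N = {(i, j, k) \<in> Rroots N. k = 0}"

definition Rbarplus :: "nat \<Rightarrow> aroot set" where
  "Rbarplus N = {(i, j, k) \<in> Rbar N. i < j}"

definition Pibar :: "nat \<Rightarrow> aroot set" where
  "Pibar N = {(i, Suc i, 0) | i. 1 \<le> i \<and> i < N}"

definition ordpart :: "nat \<Rightarrow> nat list \<Rightarrow> bool" where
  "ordpart N g \<longleftrightarrow> (\<forall>p \<in> set g. 0 < p) \<and> sum_list g = N"

definition sameblock :: "nat list \<Rightarrow> nat \<Rightarrow> nat \<Rightarrow> bool" where
  "sameblock g i j \<longleftrightarrow> (\<exists>m < length g.
      sum_list (take m g) < i \<and> i \<le> sum_list (take (Suc m) g) \<and>
      sum_list (take m g) < j \<and> j \<le> sum_list (take (Suc m) g))"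

definition Rbar_g :: "nat \<Rightarrow> nat list \<Rightarrow> aroot set" where
  "Rbar_g N g = {(i, j, k) \<in> Rbar N. sameblock g i j}"

definition Rbar_gplus :: "nat \<Rightarrow> nat list \<Rightarrow> aroot set" where
  "Rbar_gplus N g = Rbar_g N g \<inter> Rbarplus N"

definition Pibar_g :: "nat \<Rightarrow> nat list \<Rightarrow> aroot set" where
  "Pibar_g N g = Pibar N \<inter> Rbar_g N g"

(* Wbar_gamma: generated by the reflections s_alpha, alpha in Pibar_gamma
   (s_{alpha_i} = transposition of i and i+1; since these are involutions of a finite group,
    the generated submonoid is the generated subgroup) *)
inductive_set Wbar_g :: "nat \<Rightarrow> nat list \<Rightarrow> perm set" for N g where
  gen_id: "id \<in> Wbar_g N g"
| gen_step: "\<lbrakk>(i, Suc i, 0) \<in> Pibar_g N g; u \<in> Wbar_g N g\<rbrakk>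
      \<Longrightarrow> Transposition.transpose i (Suc i) \<circ> u \<in> Wbar_g N g"

definition Wsup :: "nat \<Rightarrow> nat list \<Rightarrow> welt set" where
  "Wsup N g = {x \<in> Wgrp N. \<forall>u \<in> Wbar_g N g. len N (wmult x (emb u)) \<ge> len N x}"

definition Wbarsup :: "nat \<Rightarrow> nat list \<Rightarrow> welt set" where
  "Wbarsup N g = Wsup N g \<inter> emb ` Wbar N"

definition betaof :: "nat \<Rightarrow> nat list \<Rightarrow> welt \<Rightarrow> nat list" where
  "betaof N b x = (THE g. ordpart N g \<and> Pibar_g N g = Pibar N \<inter> ract x ` Rbar_gplus N b)"

(* eta_w for w in Wbar^beta: (eta_w, eps_1) = 0, (eta_w, alpha_i) = -1 if alpha_i in
   w(Rbar_+ - Rbar_{beta,+}), 0 otherwise; so eta_w(i) = #{m < i : alpha_m in w(...)} *)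
definition eta_w :: "nat \<Rightarrow> nat list \<Rightarrow> perm \<Rightarrow> weight" where
  "eta_w N b w = (\<lambda>i. if i \<in> {1..N} then
      int (card {m \<in> {1..<i}. (m, Suc m, 0) \<in> ract (emb w) ` (Rbarplus N - Rbar_gplus N b)})
      else 0)"

definition Pminus :: "nat \<Rightarrow> weight set" where
  "Pminus N = {eta \<in> Pbar N. \<forall>(i, j, k) \<in> Rbarplus N. eta i - eta j \<le> 0}"

definition Pminus_w :: "nat \<Rightarrow> nat list \<Rightarrow> perm \<Rightarrow> weight set" where
  "Pminus_w N b w = {(\<lambda>i. eta i + eta_w N b w i) | eta. eta \<in> Pminus N}"

definition Xset :: "nat \<Rightarrow> nat list \<Rightarrow> welt set" where
  "Xset N b = {(eta, w) | eta w. emb w \<in> Wbarsup N b \<and> eta \<in> Pminus_w N b w}"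

end

theory Submission
  imports Defs
begin


definition ps :: "nat list \<Rightarrow> nat \<Rightarrow> nat" where
  "ps g k = sum_list (take k g)"

definition blk :: "nat list \<Rightarrow> nat \<Rightarrow> nat" where
  "blk g p = card {k. k \<le> length g \<and> ps g k < p}"

lemma ps_0[simp]: "ps g 0 = 0" by (simp add: ps_def)

lemma ps_Suc: "k < length g \<Longrightarrow> ps g (Suc k) = ps g k + g ! k"
  by (simp add: ps_def take_Suc_conv_app_nth)

lemma ps_mono: "k1 \<le> k2 \<Longrightarrow> ps g k1 \<le> ps g k2"
proof -
  assume "k1 \<le> k2"
  then obtain d where "k2 = k1 + d" using le_Suc_ex by blast
  then show ?thesis by (simp add: ps_def take_add)
qed

lemma ps_len: "ordpart N g \<Longrightarrow> ps g (length g) = N"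
  by (simp add: ps_def ordpart_def)

lemma ps_le_N: "ordpart N g \<Longrightarrow> ps g k \<le> N"
proof -
  assume a: "ordpart N g"
  have "ps g k = ps g (min k (length g))" by (simp add: ps_def min_def)
  also have "\<dots> \<le> ps g (length g)" by (rule ps_mono) simp
  finally show ?thesis using ps_len[OF a] by simp
qed

lemma ps_strict: "ordpart N g \<Longrightarrow> k1 < k2 \<Longrightarrow> k2 \<le> length g \<Longrightarrow> ps g k1 < ps g k2"
proof -
  assume a: "ordpart N g" "k1 < k2" "k2 \<le> length g"
  have "g ! k1 \<in> set g" using a by simp
  then have "g ! k1 > 0" using a(1) by (auto simp: ordpart_def)
  then have "ps g k1 < ps g (Suc k1)" using ps_Suc[of k1 g] a by simp
  also have "\<dots> \<le> ps g k2" using a by (intro ps_mono) simp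
  finally show ?thesis .
qed

lemma blk_mono: "p \<le> q \<Longrightarrow> blk g p \<le> blk g q"
  unfolding blk_def by (rule card_mono) auto

lemma blk_eq:
  assumes "ordpart N g" "m < length g" "ps g m < i" "i \<le> ps g (Suc m)"
  shows "blk g i = Suc m"
proof -
  have "{k. k \<le> length g \<and> ps g k < i} = {..m}"
  proof (intro set_eqI iffI)
    fix k assume "k \<in> {k. k \<le> length g \<and> ps g k < i}"
    then have "k \<le> length g" "ps g k < i" by auto
    show "k \<in> {..m}"
    proof (rule ccontr)
      assume "k \<notin> {..m}"
      then have "Suc m \<le> k" by simp
      then have "ps g (Suc m) \<le> ps g k" by (rule ps_mono)
      then show False using assms \<open>ps g k < i\<close> by simp
    qed
  next
    fix k assume "k \<in> {..m}"
    then have "ps g k \<le> ps g m" by (intro ps_mono) simp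
    then show "k \<in> {k. k \<le> length g \<and> ps g k < i}" using assms \<open>k \<in> {..m}\<close> by auto
  qed
  then show ?thesis by (simp add: blk_def)
qed

lemma blk_exists:
  assumes "ordpart N g" "i \<in> {1..N}"
  shows "\<exists>m < length g. ps g m < i \<and> i \<le> ps g (Suc m)"
proof -
  define k0 where "k0 = (LEAST k. i \<le> ps g k)"
  have ex: "i \<le> ps g (length g)" using assms ps_len by auto
  then have k0: "i \<le> ps g k0" unfolding k0_def by (rule LeastI)
  have k0le: "k0 \<le> length g" unfolding k0_def using ex by (rule Least_le)
  have "k0 \<noteq> 0"
  proof
    assume "k0 = 0" then show False using k0 assms by simp
  qed
  then obtain m where m: "k0 = Suc m" using not0_implies_Suc by blast
  have "\<not> i \<le> ps g m" unfolding k0_def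
    using m k0_def not_less_Least[of m "\<lambda>k. i \<le> ps g k"] by simp
  then show ?thesis using m k0 k0le by (intro exI[of _ m]) auto
qed

lemma sameblock_iff:
  assumes "ordpart N g"
  shows "sameblock g i j \<longleftrightarrow> i \<in> {1..N} \<and> j \<in> {1..N} \<and> blk g i = blk g j"
proof
  assume "sameblock g i j"
  then obtain m where m: "m < length g" "ps g m < i" "i \<le> ps g (Suc m)"
    "ps g m < j" "j \<le> ps g (Suc m)"
    unfolding sameblock_def ps_def by blast
  have "ps g (Suc m) \<le> N" using ps_le_N[OF assms] .
  then show "i \<in> {1..N} \<and> j \<in> {1..N} \<and> blk g i = blk g j"
    using m blk_eq[OF assms] by auto
next
  assume a: "i \<in> {1..N} \<and> j \<in> {1..N} \<and> blk g i = blk g j"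
  obtain m where m: "m < length g" "ps g m < i" "i \<le> ps g (Suc m)"
    using blk_exists[OF assms] a by blast
  obtain m' where m': "m' < length g" "ps g m' < j" "j \<le> ps g (Suc m')"
    using blk_exists[OF assms] a by blast
  have "Suc m = Suc m'" using blk_eq[OF assms m] blk_eq[OF assms m'] a by simp
  then show "sameblock g i j" unfolding sameblock_def ps_def[symmetric]
    using m m' by auto
qed

lemma blk_adj:
  assumes "ordpart N g"
  shows "blk g (Suc m) = blk g m \<longleftrightarrow> m \<notin> ps g ` {..length g}"
proof -
  have fin: "finite {k. k \<le> length g \<and> ps g k < Suc m}" by simp
  have un: "{k. k \<le> length g \<and> ps g k < Suc m} =
     {k. k \<le> length g \<and> ps g k < m} \<union> {k. k \<le> length g \<and> ps g k = m}" by auto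
  show ?thesis
  proof
    assume eq: "blk g (Suc m) = blk g m"
    show "m \<notin> ps g ` {..length g}"
    proof
      assume "m \<in> ps g ` {..length g}"
      then obtain k where "k \<le> length g" "ps g k = m" by auto
      then have "{k. k \<le> length g \<and> ps g k < m} \<subset> {k. k \<le> length g \<and> ps g k < Suc m}"
        by auto
      then have "card {k. k \<le> length g \<and> ps g k < m} < card {k. k \<le> length g \<and> ps g k < Suc m}"
        by (rule psubset_card_mono[OF fin])
      then show False using eq by (simp add: blk_def)
    qed
  next
    assume "m \<notin> ps g ` {..length g}"
    then have "{k. k \<le> length g \<and> ps g k < Suc m} = {k. k \<le> length g \<and> ps g k < m}"
      by (auto simp: less_Suc_eq)
    then show "blk g (Suc m) = blk g m" by (simp add: blk_def)
  qed
qed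

lemma sameblock_adj:
  assumes "ordpart N g" "1 \<le> m" "m < N"
  shows "sameblock g m (Suc m) \<longleftrightarrow> m \<notin> ps g ` {..length g}"
proof -
  have "sameblock g m (Suc m) \<longleftrightarrow> blk g (Suc m) = blk g m"
    using sameblock_iff[OF assms(1)] assms by auto
  then show ?thesis using blk_adj[OF assms(1)] by simp
qed




lemma psl_strict:
  assumes "ordpart N g"
  shows "sorted_wrt (<) (map (ps g) [0..<Suc (length g)])"
  unfolding sorted_wrt_iff_nth_less
  using ps_strict[OF assms] by (auto simp del: upt_Suc)

lemma cuts_sub:
  assumes g1: "ordpart N g1" and g2: "ordpart N g2"
    and adj: "\<forall>m. 1 \<le> m \<and> m < N \<longrightarrow> (sameblock g1 m (Suc m) \<longleftrightarrow> sameblock g2 m (Suc m))"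
  shows "ps g1 ` {..length g1} \<subseteq> ps g2 ` {..length g2}"
proof
  fix c assume "c \<in> ps g1 ` {..length g1}"
  then obtain k where k: "k \<le> length g1" "c = ps g1 k" by auto
  have cN: "c \<le> N" using k ps_le_N[OF g1] by simp
  show "c \<in> ps g2 ` {..length g2}"
  proof (cases "c = 0")
    case True then show ?thesis by (intro image_eqI[of _ _ 0]) auto
  next
    case c0: False
    show ?thesis
    proof (cases "c = N")
      case True then show ?thesis using ps_len[OF g2] by (intro image_eqI[of _ _ "length g2"]) auto
    next
      case False
      then have "1 \<le> c" "c < N" using c0 cN by auto
      then have "\<not> sameblock g1 c (Suc c)" using sameblock_adj[OF g1] k by auto
      then have "\<not> sameblock g2 c (Suc c)" using adj \<open>1 \<le> c\<close> \<open>c < N\<close> by blast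
      then show ?thesis using sameblock_adj[OF g2] \<open>1 \<le> c\<close> \<open>c < N\<close> by auto
    qed
  qed
qed

lemma comp_unique:
  assumes g1: "ordpart N g1" and g2: "ordpart N g2"
    and adj: "\<forall>m. 1 \<le> m \<and> m < N \<longrightarrow> (sameblock g1 m (Suc m) \<longleftrightarrow> sameblock g2 m (Suc m))"
  shows "g1 = g2"
proof -
  have "ps g1 ` {..length g1} = ps g2 ` {..length g2}"
    using cuts_sub[OF g1 g2 adj] cuts_sub[OF g2 g1] adj by blast
  moreover have "set [0..<Suc (length g)] = {..length g}" for g :: "nat list" by auto
  ultimately have "set (map (ps g1) [0..<Suc (length g1)]) = set (map (ps g2) [0..<Suc (length g2)])"
    by (simp del: upt_Suc)
  then have L: "map (ps g1) [0..<Suc (length g1)] = map (ps g2) [0..<Suc (length g2)]"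
    using psl_strict[OF g1] psl_strict[OF g2]
    by (intro sorted_distinct_set_unique) (auto simp: strict_sorted_iff simp del: upt_Suc)
  then have len: "length g1 = length g2"
    by (metis Suc_inject length_map length_upt minus_nat.diff_0)
  have ps_eq: "ps g1 k = ps g2 k" if "k \<le> length g1" for k
  proof -
    have "map (ps g1) [0..<Suc (length g1)] ! k = map (ps g2) [0..<Suc (length g2)] ! k"
      using L by simp
    then show ?thesis using that len by (simp del: upt_Suc)
  qed
  show ?thesis
  proof (rule nth_equalityI)
    show "length g1 = length g2" by (rule len)
    fix k assume "k < length g1"
    then have "g1 ! k = ps g1 (Suc k) - ps g1 k" "g2 ! k = ps g2 (Suc k) - ps g2 k"
      using ps_Suc[of k g1] ps_Suc[of k g2] len by auto
    then show "g1 ! k = g2 ! k" using ps_eq \<open>k < length g1\<close> by simp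
  qed
qed

lemma ps_snoc: "k \<le> length g \<Longrightarrow> ps (g @ [x]) k = ps g k"
  by (simp add: ps_def)

lemma ps_snoc_last: "ps (g @ [x]) (Suc (length g)) = sum_list g + x"
  by (simp add: ps_def)

lemma comp_exists:
  "finite C \<Longrightarrow> C \<subseteq> {0..N} \<Longrightarrow> 0 \<in> C \<Longrightarrow> N \<in> C \<Longrightarrow>
    \<exists>g. ordpart N g \<and> ps g ` {..length g} = C"
proof (induction N arbitrary: C rule: less_induct)
  case (less N)
  show ?case
  proof (cases "N = 0")
    case True
    then have "C = {0}" using less.prems by auto
    then show ?thesis using True by (intro exI[of _ "[]"]) (auto simp: ordpart_def)
  next
    case False
    define C' where "C' = C - {N}"
    define c where "c = Max C'"
    have "0 \<in> C'" using less.prems False by (auto simp: C'_def)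
    then have fin: "finite C'" and ne: "C' \<noteq> {}" using less.prems by (auto simp: C'_def)
    have cC: "c \<in> C'" unfolding c_def using fin ne by (rule Max_in)
    have cle: "\<forall>x\<in>C'. x \<le> c" unfolding c_def using fin by auto
    have cN: "c < N" using cC less.prems by (auto simp: C'_def)
    have "C' \<subseteq> {0..c}" using cle by auto
    then obtain g where g: "ordpart c g" "ps g ` {..length g} = C'"
      using less.IH[OF cN fin] \<open>0 \<in> C'\<close> cC by blast
    define g' where "g' = g @ [N - c]"
    have op: "ordpart N g'" using g cN by (auto simp: g'_def ordpart_def)
    have "ps g' ` {..length g'} = ps g' ` {..length g} \<union> {ps g' (Suc (length g))}"
      by (auto simp: g'_def le_Suc_eq)
    also have "ps g' ` {..length g} = C'"
      using g(2) by (auto simp: g'_def ps_snoc image_def)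
    also have "ps g' (Suc (length g)) = N"
      using g(1) cN by (simp add: g'_def ps_snoc_last ordpart_def)
    finally have "ps g' ` {..length g'} = C" using less.prems by (auto simp: C'_def)
    then show ?thesis using op by blast
  qed
qed

lemma Pibar_g_eq:
  "Pibar_g N g = {(m, Suc m, 0) | m. 1 \<le> m \<and> m < N \<and> sameblock g m (Suc m)}"
  by (auto simp: Pibar_g_def Pibar_def Rbar_g_def Rbar_def Rroots_def)

lemma comp_ex1:
  assumes "S \<subseteq> Pibar N"
  shows "\<exists>!g. ordpart N g \<and> Pibar_g N g = S"
proof -
  define C where "C = {0, N} \<union> {m. 1 \<le> m \<and> m < N \<and> (m, Suc m, 0) \<notin> S}"
  have "finite C" unfolding C_def by (rule finite_subset[of _ "{0..N}"]) auto
  moreover have sub: "C \<subseteq> {0..N}" "0 \<in> C" "N \<in> C" by (auto simp: C_def)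
  ultimately obtain g where g: "ordpart N g" "ps g ` {..length g} = C"
    using comp_exists[of C N] by blast
  have adj: "sameblock g m (Suc m) \<longleftrightarrow> (m, Suc m, 0) \<in> S" if "1 \<le> m" "m < N" for m
    using sameblock_adj[OF g(1) that] g(2) that by (auto simp: C_def)
  have "Pibar_g N g = S"
  proof
    show "Pibar_g N g \<subseteq> S" using adj by (auto simp: Pibar_g_eq)
    show "S \<subseteq> Pibar_g N g"
    proof
      fix a assume "a \<in> S"
      then obtain m where "a = (m, Suc m, 0)" "1 \<le> m" "m < N" using assms by (auto simp: Pibar_def)
      then show "a \<in> Pibar_g N g" using adj \<open>a \<in> S\<close> by (auto simp: Pibar_g_eq)
    qed
  qed
  moreover have "g2 = g" if "ordpart N g2" "Pibar_g N g2 = S" for g2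
  proof (rule comp_unique[OF that(1) g(1)], intro allI impI)
    fix m assume m: "1 \<le> m \<and> m < N"
    have "(m, Suc m, 0) \<in> Pibar_g N g2 \<longleftrightarrow> sameblock g2 m (Suc m)" using m by (auto simp: Pibar_g_eq)
    then show "sameblock g2 m (Suc m) \<longleftrightarrow> sameblock g m (Suc m)"
      using adj m that(2) by auto
  qed
  ultimately show ?thesis using g(1) by blast
qed

lemma betaof_spec:
  "ordpart N (betaof N b x) \<and> Pibar_g N (betaof N b x) = Pibar N \<inter> ract x ` Rbar_gplus N b"
  unfolding betaof_def by (rule theI') (rule comp_ex1, blast)

lemma betaof_adj:
  assumes "1 \<le> m" "m < N"
  shows "sameblock (betaof N b x) m (Suc m) \<longleftrightarrow> (m, Suc m, (0::int)) \<in> ract x ` Rbar_gplus N b"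
proof -
  have "(m, Suc m, 0) \<in> Pibar_g N (betaof N b x) \<longleftrightarrow> sameblock (betaof N b x) m (Suc m)"
    using assms by (auto simp: Pibar_g_eq)
  moreover have "(m, Suc m, 0) \<in> Pibar N" using assms by (auto simp: Pibar_def)
  ultimately show ?thesis using betaof_spec[of N b x] by blast
qed




definition keyless :: "weight \<Rightarrow> perm \<Rightarrow> nat \<Rightarrow> nat \<Rightarrow> bool" where
  "keyless \<eta> w p q \<longleftrightarrow> \<eta> (w p) < \<eta> (w q) \<or> (\<eta> (w p) = \<eta> (w q) \<and> w p < w q)"

lemma keyless_trans: "keyless \<eta> w p q \<Longrightarrow> keyless \<eta> w q r \<Longrightarrow> keyless \<eta> w p r"
  unfolding keyless_def by auto

lemma keyless_total: "inj w \<Longrightarrow> p \<noteq> q \<Longrightarrow> keyless \<eta> w p q \<or> keyless \<eta> w q p"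
  unfolding keyless_def by (metis inj_eq linorder_neqE)

lemma keyless_asym: "keyless \<eta> w p q \<Longrightarrow> \<not> keyless \<eta> w q p"
  unfolding keyless_def by auto

lemma wbar_g_props:
  assumes "ordpart N g" "u \<in> Wbar_g N g"
  shows "u permutes {1..N} \<and> (\<forall>p. blk g (u p) = blk g p)"
  using assms(2)
proof (induction rule: Wbar_g.induct)
  case gen_id
  then show ?case using permutes_id[of "{1..N}"] by (simp add: id_def)
next
  case (gen_step i u)
  then have i: "1 \<le> i" "i < N" "sameblock g i (Suc i)" by (auto simp: Pibar_g_eq)
  then have bi: "blk g i = blk g (Suc i)" using sameblock_iff[OF assms(1)] by auto
  have "Transposition.transpose i (Suc i) permutes {1..N}"
    using i by (intro permutes_swap_id) auto
  then have "Transposition.transpose i (Suc i) \<circ> u permutes {1..N}"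
    using gen_step.IH by (intro permutes_compose) auto
  moreover have "blk g (Transposition.transpose i (Suc i) q) = blk g q" for q
    using bi by (auto simp: transpose_def)
  ultimately show ?case using gen_step.IH by (simp add: o_def)
qed

lemma transp_in:
  assumes "1 \<le> p" "p < N" "sameblock g p (Suc p)"
  shows "Transposition.transpose p (Suc p) \<in> Wbar_g N g"
proof -
  have "(p, Suc p, 0) \<in> Pibar_g N g" using assms by (auto simp: Pibar_g_eq)
  from Wbar_g.gen_step[OF this Wbar_g.gen_id] show ?thesis by simp
qed

lemma wmult_emb: "wmult (\<eta>, w) (emb u) = (\<eta>, w \<circ> u)"
  by (simp add: wmult_def emb_def wact_def)

lemma finite_inv: "finite {a \<in> Rplus N. ract (\<eta>, w) a \<in> Rminus N}"
proof (rule finite_subset)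
  show "{a \<in> Rplus N. ract (\<eta>, w) a \<in> Rminus N} \<subseteq>
    Sigma {1..N} (\<lambda>i. Sigma {1..N} (\<lambda>j. {0..\<eta> (w i) - \<eta> (w j)}))"
  proof
    fix a assume a: "a \<in> {a \<in> Rplus N. ract (\<eta>, w) a \<in> Rminus N}"
    obtain i j k where ijk: "a = (i, j, k)" by (cases a) auto
    show "a \<in> Sigma {1..N} (\<lambda>i. Sigma {1..N} (\<lambda>j. {0..\<eta> (w i) - \<eta> (w j)}))"
      using a unfolding ijk by (auto simp: Rplus_def Rminus_def Rroots_def ract_def)
  qed
  show "finite (Sigma {1..N} (\<lambda>i. Sigma {1..N} (\<lambda>j. {0..\<eta> (w i) - \<eta> (w j)})))"
    by (intro finite_SigmaI) auto
qed

lemma ract0: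
  assumes "w permutes {1..N}" "p \<in> {1..N}" "q \<in> {1..N}" "p \<noteq> q"
  shows "ract (\<eta>, w) (p, q, 0) \<in> Rplus N \<longleftrightarrow> keyless \<eta> w p q"
    and "ract (\<eta>, w) (p, q, 0) \<in> Rminus N \<longleftrightarrow> \<not> keyless \<eta> w p q"
proof -
  have wp: "w p \<in> {1..N}" "w q \<in> {1..N}" using permutes_in_image[OF assms(1)] assms(2,3) by auto
  have "w p \<noteq> w q" using permutes_inj[OF assms(1)] assms(4) by (simp add: inj_eq)
  then show "ract (\<eta>, w) (p, q, 0) \<in> Rplus N \<longleftrightarrow> keyless \<eta> w p q"
    using wp by (auto simp: ract_def Rplus_def Rroots_def keyless_def)
  then show "ract (\<eta>, w) (p, q, 0) \<in> Rminus N \<longleftrightarrow> \<not> keyless \<eta> w p q"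
    using wp \<open>w p \<noteq> w q\<close> by (auto simp: Rminus_def ract_def Rroots_def)
qed

definition Uact :: "perm \<Rightarrow> aroot \<Rightarrow> aroot" where
  "Uact s a = (case a of (i, j, k) \<Rightarrow> (s i, s j, k))"

lemma ract_comp: "ract (\<eta>, w \<circ> s) a = ract (\<eta>, w) (Uact s a)"
  by (cases a) (auto simp: ract_def Uact_def)

lemma Uact_maps:
  assumes g: "ordpart N g" and s: "s permutes {1..N}" and sb: "\<forall>p. blk g (s p) = blk g p"
    and a: "a \<in> Rplus N - Rbar_gplus N g"
  shows "Uact s a \<in> Rplus N - Rbar_gplus N g"
proof -
  obtain i j k where ijk: "a = (i, j, k)" by (cases a) auto
  have ij: "i \<in> {1..N}" "j \<in> {1..N}" "i \<noteq> j" using a ijk by (auto simp: Rplus_def Rroots_def)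
  have sij: "s i \<in> {1..N}" "s j \<in> {1..N}" "s i \<noteq> s j"
    using permutes_in_image[OF s] permutes_inj[OF s] ij by (auto simp: inj_eq)
  show ?thesis
  proof (cases "k = 0")
    case False
    then have "k > 0" using a ijk by (auto simp: Rplus_def)
    then show ?thesis using sij ijk
      by (auto simp: Uact_def Rplus_def Rroots_def Rbar_gplus_def Rbar_g_def Rbar_def)
  next
    case True
    then have "i < j" "\<not> sameblock g i j" using a ijk ij
      by (auto simp: Rplus_def Rroots_def Rbar_gplus_def Rbar_g_def Rbar_def Rbarplus_def)
    then have "blk g i \<noteq> blk g j" using sameblock_iff[OF g] ij by auto
    moreover have "blk g i \<le> blk g j" using \<open>i < j\<close> blk_mono by simp
    ultimately have "blk g (s i) < blk g (s j)" using sb by simp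
    then have "s i < s j" using blk_mono[of "s j" "s i" g] by (meson not_le)
    moreover have "\<not> sameblock g (s i) (s j)" using sameblock_iff[OF g] \<open>blk g (s i) < blk g (s j)\<close> by auto
    ultimately show ?thesis using sij ijk True
      by (auto simp: Uact_def Rplus_def Rroots_def Rbar_gplus_def Rbar_g_def Rbar_def)
  qed
qed

lemma Rbar_gplus_sub: "Rbar_gplus N g \<subseteq> Rplus N"
  by (auto simp: Rbar_gplus_def Rbar_g_def Rbar_def Rplus_def Rroots_def Rbarplus_def)

lemma len_split:
  assumes g: "ordpart N g" and s: "s permutes {1..N}" and sb: "\<forall>p. blk g (s p) = blk g p"
  shows "len N (\<eta>, w \<circ> s) = card {a \<in> Rbar_gplus N g. ract (\<eta>, w \<circ> s) a \<in> Rminus N}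
    + card {a \<in> Rplus N - Rbar_gplus N g. ract (\<eta>, w) a \<in> Rminus N}"
proof -
  let ?A = "{a \<in> Rbar_gplus N g. ract (\<eta>, w \<circ> s) a \<in> Rminus N}"
  let ?B' = "{a \<in> Rplus N - Rbar_gplus N g. ract (\<eta>, w \<circ> s) a \<in> Rminus N}"
  let ?B = "{a \<in> Rplus N - Rbar_gplus N g. ract (\<eta>, w) a \<in> Rminus N}"
  have un: "{a \<in> Rplus N. ract (\<eta>, w \<circ> s) a \<in> Rminus N} = ?A \<union> ?B'"
    using Rbar_gplus_sub by blast
  have fin: "finite {a \<in> Rplus N. ract (\<eta>, w \<circ> s) a \<in> Rminus N}" by (rule finite_inv)
  have "len N (\<eta>, w \<circ> s) = card ?A + card ?B'"
    unfolding len_def un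
    by (rule card_Un_disjoint) (use fin un in auto)
  moreover have "card ?B' = card ?B"
  proof (rule bij_betw_same_card)
    have si: "inv s permutes {1..N}" using s by (rule permutes_inv)
    have sbi: "\<forall>p. blk g (inv s p) = blk g p"
      using sb permutes_inverses(1)[OF s] by metis
    have UU1: "Uact s (Uact (inv s) a) = a" for a
      using permutes_inverses(1)[OF s] by (cases a) (auto simp: Uact_def)
    have UU2: "Uact (inv s) (Uact s a) = a" for a
      using permutes_inverses(2)[OF s] by (cases a) (auto simp: Uact_def)
    show "bij_betw (Uact s) ?B' ?B"
    proof (rule bij_betw_byWitness[where f' = "Uact (inv s)"])
      show "\<forall>a\<in>?B'. Uact (inv s) (Uact s a) = a" using UU2 by simp
      show "\<forall>a\<in>?B. Uact s (Uact (inv s) a) = a" using UU1 by simp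
      show "Uact s ` ?B' \<subseteq> ?B"
        using Uact_maps[OF g s sb] ract_comp by auto
      show "Uact (inv s) ` ?B \<subseteq> ?B'"
      proof
        fix b assume "b \<in> Uact (inv s) ` ?B"
        then obtain a where a: "a \<in> ?B" "b = Uact (inv s) a" by auto
        then show "b \<in> ?B'" using Uact_maps[OF g si sbi, of a] ract_comp[of \<eta> w s b] UU1 by auto
      qed
    qed
  qed
  ultimately show ?thesis by simp
qed

lemma len_split_id:
  assumes g: "ordpart N g"
  shows "len N (\<eta>, w) = card {a \<in> Rbar_gplus N g. ract (\<eta>, w) a \<in> Rminus N}
    + card {a \<in> Rplus N - Rbar_gplus N g. ract (\<eta>, w) a \<in> Rminus N}"
  using len_split[OF g permutes_id, of \<eta> w] by simp

lemma sameblock_chain: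
  assumes g: "ordpart N g"
    and adj: "\<forall>p. 1 \<le> p \<and> p < N \<and> sameblock g p (Suc p) \<longrightarrow> R p (Suc p)"
    and tr: "\<And>a b c. R a b \<Longrightarrow> R b c \<Longrightarrow> R a c"
  shows "p < q \<Longrightarrow> sameblock g p q \<Longrightarrow> R p q"
proof (induction q)
  case 0 then show ?case by simp
next
  case (Suc q)
  have r: "p \<in> {1..N}" "Suc q \<in> {1..N}" "blk g p = blk g (Suc q)"
    using Suc.prems sameblock_iff[OF g] by auto
  have "blk g p \<le> blk g q" "blk g q \<le> blk g (Suc q)" using Suc.prems blk_mono by auto
  then have bq: "blk g q = blk g p" "blk g q = blk g (Suc q)" using r by auto
  have q1: "1 \<le> q" "q < N" using r Suc.prems by auto
  have sq: "sameblock g q (Suc q)" using sameblock_iff[OF g] bq r q1 by auto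
  then have Rq: "R q (Suc q)" using adj q1 by blast
  show ?case
  proof (cases "p = q")
    case True then show ?thesis using Rq by simp
  next
    case False
    then have "p < q" using Suc.prems by simp
    moreover have "sameblock g p q" using sameblock_iff[OF g] bq r q1 by auto
    ultimately have "R p q" using Suc.IH by blast
    then show ?thesis using Rq tr by blast
  qed
qed

lemma transpose_order:
  "i < j \<Longrightarrow> (i, j) \<noteq> (p, Suc p) \<Longrightarrow>
    Transposition.transpose p (Suc p) i < Transposition.transpose p (Suc p) j"
  by (auto simp: transpose_def)

lemma Wsup_char:
  assumes g: "ordpart N g" and x: "(\<eta>, w) \<in> Wgrp N"
  shows "(\<eta>, w) \<in> Wsup N g \<longleftrightarrow>
    (\<forall>p. 1 \<le> p \<and> p < N \<and> sameblock g p (Suc p) \<longrightarrow> keyless \<eta> w p (Suc p))"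
proof -
  have w: "w permutes {1..N}" using x by (simp add: Wgrp_def Wbar_def)
  have injw: "inj w" using w permutes_inj by blast
  show ?thesis
  proof
    assume sup: "(\<eta>, w) \<in> Wsup N g"
    show "\<forall>p. 1 \<le> p \<and> p < N \<and> sameblock g p (Suc p) \<longrightarrow> keyless \<eta> w p (Suc p)"
    proof (rule ccontr)
      assume "\<not> ?thesis"
      then obtain p where p: "1 \<le> p" "p < N" "sameblock g p (Suc p)" "\<not> keyless \<eta> w p (Suc p)"
        by blast
      define u where "u = Transposition.transpose p (Suc p)"
      have uW: "u \<in> Wbar_g N g" unfolding u_def using transp_in[OF p(1,2,3)] .
      have u: "u permutes {1..N}" "\<forall>q. blk g (u q) = blk g q" using wbar_g_props[OF g uW] by auto
      let ?Au = "{a \<in> Rbar_gplus N g. ract (\<eta>, w \<circ> u) a \<in> Rminus N}"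
      let ?A = "{a \<in> Rbar_gplus N g. ract (\<eta>, w) a \<in> Rminus N}"
      have finA: "finite ?A"
        by (rule finite_subset[OF _ finite_inv[of N \<eta> w]]) (use Rbar_gplus_sub in auto)
      have pA: "(p, Suc p, 0) \<in> ?A"
      proof -
        have "(p, Suc p, 0) \<in> Rbar_gplus N g" using p(1-3)
          by (simp add: Rbar_gplus_def Rbar_g_def Rbar_def Rbarplus_def Rroots_def)
        moreover have "ract (\<eta>, w) (p, Suc p, 0) \<in> Rminus N"
          using ract0(2)[OF w, of p "Suc p" \<eta>] p by simp
        ultimately show ?thesis by simp
      qed
      have "Uact u ` ?Au \<subseteq> ?A - {(p, Suc p, 0)}"
      proof
        fix b assume "b \<in> Uact u ` ?Au"
        then obtain a where a: "a \<in> ?Au" "b = Uact u a" by auto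
        obtain i j k where ijk: "a = (i, j, k)" by (cases a) auto
        have ij: "k = 0" "i < j" "sameblock g i j" "i \<in> {1..N}" "j \<in> {1..N}"
          using a(1) ijk by (auto simp: Rbar_gplus_def Rbar_g_def Rbar_def Rbarplus_def Rroots_def)
        have uij: "u i \<in> {1..N}" "u j \<in> {1..N}" "u i \<noteq> u j"
          using permutes_in_image[OF u(1)] permutes_inj[OF u(1)] ij by (auto simp: inj_eq)
        have nk: "\<not> keyless \<eta> w (u i) (u j)"
          using a(1) ijk ij ract_comp[of \<eta> w u a] ract0(2)[OF w uij] by (auto simp: Uact_def)
        have ne: "(i, j) \<noteq> (p, Suc p)"
        proof
          assume "(i, j) = (p, Suc p)"
          then have "u i = Suc p" "u j = p" by (auto simp: u_def)
          then show False using nk p(4) keyless_total[OF injw, of p "Suc p" \<eta>] by auto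
        qed
        have lt: "u i < u j" unfolding u_def using transpose_order[OF ij(2) ne] .
        have sb: "sameblock g (u i) (u j)" using sameblock_iff[OF g] ij uij u(2) by auto
        have "(u i, u j) \<noteq> (p, Suc p)"
        proof
          assume "(u i, u j) = (p, Suc p)"
          then have "i = Suc p" "j = p" unfolding u_def
            by (auto simp: transpose_def split: if_splits)
          then show False using ij by simp
        qed
        moreover have "(u i, u j, 0) \<in> Rbar_gplus N g" using lt sb uij
          by (simp add: Rbar_gplus_def Rbar_g_def Rbar_def Rbarplus_def Rroots_def)
        moreover have "ract (\<eta>, w) (u i, u j, 0) \<in> Rminus N" using ract0(2)[OF w uij] nk by simp
        moreover have "b = (u i, u j, 0)" using a(2) ijk ij(1) by (simp add: Uact_def)
        ultimately show "b \<in> ?A - {(p, Suc p, 0)}" by auto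
      qed
      moreover have "inj_on (Uact u) ?Au"
      proof -
        have "inj (Uact u)"
        proof (rule injI)
          fix a b assume ab: "Uact u a = Uact u b"
          obtain a1 a2 a3 where av: "a = (a1, a2, a3)" by (cases a) auto
          obtain b1 b2 b3 where bv: "b = (b1, b2, b3)" by (cases b) auto
          have "u a1 = u b1" "u a2 = u b2" "a3 = b3" using ab av bv by (auto simp: Uact_def)
          then show "a = b" using av bv permutes_inj[OF u(1)] by (simp add: inj_eq)
        qed
        then show ?thesis by (rule inj_on_subset) simp
      qed
      ultimately have "card ?Au \<le> card (?A - {(p, Suc p, 0)})"
        using finA by (intro card_inj_on_le) auto
      also have "\<dots> < card ?A" by (rule card_Diff1_less[OF finA pA])
      finally have "card ?Au < card ?A" .
      then have "len N (\<eta>, w \<circ> u) < len N (\<eta>, w)"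
        using len_split[OF g u(1) u(2), of \<eta> w] len_split_id[OF g, of \<eta> w] by simp
      then have "len N (wmult (\<eta>, w) (emb u)) < len N (\<eta>, w)" by (simp add: wmult_emb)
      moreover have "len N (wmult (\<eta>, w) (emb u)) \<ge> len N (\<eta>, w)"
      proof -
        have "\<forall>u\<in>Wbar_g N g. len N (wmult (\<eta>, w) (emb u)) \<ge> len N (\<eta>, w)"
          using sup by (simp add: Wsup_def)
        then show ?thesis using uW by (rule bspec)
      qed
      ultimately show False by simp
    qed
  next
    assume adj: "\<forall>p. 1 \<le> p \<and> p < N \<and> sameblock g p (Suc p) \<longrightarrow> keyless \<eta> w p (Suc p)"
    have gen: "keyless \<eta> w p q" if "p < q" "sameblock g p q" for p q
      using sameblock_chain[where R="keyless \<eta> w", OF g adj keyless_trans that] .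
    have A0: "{a \<in> Rbar_gplus N g. ract (\<eta>, w) a \<in> Rminus N} = {}"
    proof -
      have "ract (\<eta>, w) a \<notin> Rminus N" if "a \<in> Rbar_gplus N g" for a
      proof -
        obtain i j k where ijk: "a = (i, j, k)" by (cases a) auto
        have ij: "k = 0" "i < j" "sameblock g i j" "i \<in> {1..N}" "j \<in> {1..N}"
          using that ijk by (auto simp: Rbar_gplus_def Rbar_g_def Rbar_def Rbarplus_def Rroots_def)
        then show ?thesis using ract0(2)[OF w ij(4,5)] gen[OF ij(2,3)] ijk by auto
      qed
      then show ?thesis by auto
    qed
    have "len N (wmult (\<eta>, w) (emb u)) \<ge> len N (\<eta>, w)" if uW: "u \<in> Wbar_g N g" for u
    proof -
      have u: "u permutes {1..N}" "\<forall>q. blk g (u q) = blk g q" using wbar_g_props[OF g uW] by auto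
      show ?thesis
        using len_split[OF g u(1) u(2), of \<eta> w] len_split_id[OF g, of \<eta> w] A0
        by (simp add: wmult_emb)
    qed
    then have "\<forall>u\<in>Wbar_g N g. len N (wmult (\<eta>, w) (emb u)) \<ge> len N (\<eta>, w)" by blast
    then show "(\<eta>, w) \<in> Wsup N g" using x by (simp add: Wsup_def)
  qed
qed




lemma emb_inj: "emb u = emb v \<Longrightarrow> u = v" by (simp add: emb_def)

lemma Wbarsup_char:
  assumes g: "ordpart N g"
  shows "emb v \<in> Wbarsup N g \<longleftrightarrow> v permutes {1..N} \<and>
    (\<forall>p. 1 \<le> p \<and> p < N \<and> sameblock g p (Suc p) \<longrightarrow> v p < v (Suc p))"
proof -
  have e: "emb v \<in> emb ` Wbar N \<longleftrightarrow> v permutes {1..N}"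
    using emb_inj by (auto simp: Wbar_def)
  have W: "((\<lambda>_. 0), v) \<in> Wgrp N \<longleftrightarrow> v permutes {1..N}"
    by (simp add: Wgrp_def Pbar_def Wbar_def)
  show ?thesis
  proof (cases "v permutes {1..N}")
    case True
    have W': "((\<lambda>_. 0), v) \<in> Wgrp N" using W True by simp
    have k: "keyless (\<lambda>_. 0) v p q \<longleftrightarrow> v p < v q" for p q by (simp add: keyless_def)
    have "emb v \<in> Wsup N g \<longleftrightarrow> (\<forall>p. 1 \<le> p \<and> p < N \<and> sameblock g p (Suc p) \<longrightarrow> v p < v (Suc p))"
      unfolding emb_def Wsup_char[OF g W'] k by (rule refl)
    moreover have "emb v \<in> Wbarsup N g \<longleftrightarrow> emb v \<in> Wsup N g"
      using e True by (simp add: Wbarsup_def)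
    ultimately show ?thesis using True by simp
  next
    case False
    then show ?thesis using e by (simp add: Wbarsup_def)
  qed
qed

lemma Wbarsup_emb: "y \<in> Wbarsup N g \<Longrightarrow> \<exists>u. y = emb u"
  by (auto simp: Wbarsup_def)

lemma M_char:
  assumes v: "v permutes {1..N}"
  shows "(m, Suc m, 0) \<in> ract (emb v) ` (Rbarplus N - Rbar_gplus N b) \<longleftrightarrow>
    (1 \<le> m \<and> m < N \<and> inv v m < inv v (Suc m) \<and> \<not> sameblock b (inv v m) (inv v (Suc m)))"
proof
  assume "(m, Suc m, 0) \<in> ract (emb v) ` (Rbarplus N - Rbar_gplus N b)"
  then obtain i j k where ijk: "(i, j, k) \<in> Rbarplus N - Rbar_gplus N b"
    "(m, Suc m, 0) = ract (emb v) (i, j, k)" by (metis imageE prod_cases3)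
  then have eq: "v i = m" "v j = Suc m" "k = 0" and ij: "i < j" "i \<in> {1..N}" "j \<in> {1..N}"
    "\<not> sameblock b i j"
    by (auto simp: ract_def emb_def Rbarplus_def Rbar_def Rroots_def Rbar_gplus_def Rbar_g_def)
  have "inv v m = i" using eq(1) permutes_inverses(2)[OF v, of i] by simp
  moreover have "inv v (Suc m) = j" using eq(2) permutes_inverses(2)[OF v, of j] by simp
  moreover have "m \<in> {1..N}" unfolding eq(1)[symmetric] using permutes_in_image[OF v] ij(2) by blast
  moreover have "Suc m \<in> {1..N}" unfolding eq(2)[symmetric] using permutes_in_image[OF v] ij(3) by blast
  ultimately show "1 \<le> m \<and> m < N \<and> inv v m < inv v (Suc m) \<and> \<not> sameblock b (inv v m) (inv v (Suc m))"
    using ij by auto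
next
  assume a: "1 \<le> m \<and> m < N \<and> inv v m < inv v (Suc m) \<and> \<not> sameblock b (inv v m) (inv v (Suc m))"
  have vi: "v (inv v m) = m" "v (inv v (Suc m)) = Suc m" using permutes_inverses(1)[OF v] by auto
  have r: "inv v m \<in> {1..N}" "inv v (Suc m) \<in> {1..N}"
    using a permutes_in_image[OF permutes_inv[OF v], of m] permutes_in_image[OF permutes_inv[OF v], of "Suc m"]
    by simp_all
  have "(inv v m, inv v (Suc m), 0) \<in> Rbarplus N - Rbar_gplus N b"
    using a r by (auto simp: Rbarplus_def Rbar_def Rroots_def Rbar_gplus_def Rbar_g_def)
  moreover have "ract (emb v) (inv v m, inv v (Suc m), 0) = (m, Suc m, 0)"
    using vi by (simp add: ract_def emb_def)
  ultimately show "(m, Suc m, 0) \<in> ract (emb v) ` (Rbarplus N - Rbar_gplus N b)"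
    by (metis image_eqI)
qed

definition Mc :: "nat \<Rightarrow> nat list \<Rightarrow> perm \<Rightarrow> nat \<Rightarrow> bool" where
  "Mc N b v m \<longleftrightarrow> (m, Suc m, 0) \<in> ract (emb v) ` (Rbarplus N - Rbar_gplus N b)"

lemma eta_w_Suc:
  assumes "1 \<le> m" "m < N"
  shows "eta_w N b v (Suc m) = eta_w N b v m + (if Mc N b v m then 1 else 0)"
proof -
  have "{m' \<in> {1..<Suc m}. Mc N b v m'} = {m' \<in> {1..<m}. Mc N b v m'} \<union> (if Mc N b v m then {m} else {})"
    using assms by (cases "Mc N b v m") (auto simp: less_Suc_eq)
  then have "card {m' \<in> {1..<Suc m}. Mc N b v m'} = card {m' \<in> {1..<m}. Mc N b v m'} + (if Mc N b v m then 1 else 0)"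
    by (cases "Mc N b v m") auto
  then show ?thesis using assms by (simp add: eta_w_def Mc_def)
qed

lemma eta_w_out: "i \<notin> {1..N} \<Longrightarrow> eta_w N b v i = 0"
  unfolding eta_w_def by (subst if_not_P) auto

definition Xc :: "nat \<Rightarrow> nat list \<Rightarrow> weight \<Rightarrow> perm \<Rightarrow> bool" where
  "Xc N b e v \<longleftrightarrow> v permutes {1..N} \<and>
    (\<forall>p. 1 \<le> p \<and> p < N \<and> sameblock b p (Suc p) \<longrightarrow> v p < v (Suc p)) \<and>
    (\<lambda>i. e i - eta_w N b v i) \<in> Pminus N"

lemma Xset_iff:
  assumes b: "ordpart N b"
  shows "(e, v) \<in> Xset N b \<longleftrightarrow> Xc N b e v"
proof
  assume "(e, v) \<in> Xset N b"
  then obtain \<eta> where h: "emb v \<in> Wbarsup N b" "\<eta> \<in> Pminus N" "e = (\<lambda>i. \<eta> i + eta_w N b v i)"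
    by (auto simp: Xset_def Pminus_w_def)
  have "(\<lambda>i. e i - eta_w N b v i) = \<eta>" using h(3) by auto
  then show "Xc N b e v" using h Wbarsup_char[OF b] by (simp add: Xc_def)
next
  assume "Xc N b e v"
  then have h: "emb v \<in> Wbarsup N b" "(\<lambda>i. e i - eta_w N b v i) \<in> Pminus N"
    using Wbarsup_char[OF b] by (auto simp: Xc_def)
  have "\<exists>eta. e = (\<lambda>i. eta i + eta_w N b v i) \<and> eta \<in> Pminus N"
    using h(2) by (intro exI[of _ "\<lambda>i. e i - eta_w N b v i"]) auto
  then have "e \<in> Pminus_w N b v" by (simp add: Pminus_w_def)
  then show "(e, v) \<in> Xset N b" using h(1) by (auto simp: Xset_def)
qed

lemma mono_chain:
  assumes "\<forall>m. 1 \<le> m \<and> m < N \<longrightarrow> f m \<le> (f (Suc m) :: int)"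
  shows "1 \<le> i \<Longrightarrow> i \<le> j \<Longrightarrow> j \<le> N \<Longrightarrow> f i \<le> f j"
proof (induction j)
  case 0 then show ?case by simp
next
  case (Suc j)
  show ?case
  proof (cases "i = Suc j")
    case True then show ?thesis by simp
  next
    case False
    then have "f i \<le> f j" using Suc by simp
    also have "f j \<le> f (Suc j)" using assms Suc.prems False by auto
    finally show ?thesis .
  qed
qed

definition prec :: "nat list \<Rightarrow> nat \<Rightarrow> nat \<Rightarrow> bool" where
  "prec b p q \<longleftrightarrow> blk b q < blk b p \<or> (blk b p = blk b q \<and> p < q)"

lemma prec_trans: "prec b p q \<Longrightarrow> prec b q r \<Longrightarrow> prec b p r"
  unfolding prec_def by auto

lemma prec_asym: "prec b p q \<Longrightarrow> \<not> prec b q p"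
  unfolding prec_def by auto

lemma prec_total: "p \<noteq> q \<Longrightarrow> prec b p q \<or> prec b q p"
  unfolding prec_def by auto

lemma prec_blk: "prec b p q \<Longrightarrow> blk b q \<le> blk b p"
  unfolding prec_def by auto

context
  fixes N b e v
  assumes b: "ordpart N b" and X: "Xc N b e v"
begin

lemma X_perm: "v permutes {1..N}" using X by (simp add: Xc_def)

lemma X_inc: "p < q \<Longrightarrow> sameblock b p q \<Longrightarrow> v p < v q"
  using sameblock_chain[where R="\<lambda>p q. v p < v q", OF b] X by (auto simp: Xc_def)

lemma X_Pbar: "i \<notin> {1..N} \<Longrightarrow> e i = 0"
proof -
  assume i: "i \<notin> {1..N}"
  have "(\<lambda>i. e i - eta_w N b v i) \<in> Pbar N" using X by (simp add: Xc_def Pminus_def)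
  then have "e i - eta_w N b v i = 0" using i by (simp add: Pbar_def)
  then show ?thesis using eta_w_out[OF i] by simp
qed

lemma X_Mc: "1 \<le> m \<Longrightarrow> m < N \<Longrightarrow> Mc N b v m \<longleftrightarrow>
    inv v m < inv v (Suc m) \<and> \<not> sameblock b (inv v m) (inv v (Suc m))"
  using M_char[OF X_perm] by (simp add: Mc_def)

lemma X_eta_step: "1 \<le> m \<Longrightarrow> m < N \<Longrightarrow> e m + (if Mc N b v m then 1 else 0) \<le> e (Suc m)"
proof -
  assume m: "1 \<le> m" "m < N"
  have "\<forall>(i, j, k) \<in> Rbarplus N. (\<lambda>i. e i - eta_w N b v i) i - (\<lambda>i. e i - eta_w N b v i) j \<le> 0"
    using X by (simp add: Xc_def Pminus_def)
  moreover have "(m, Suc m, 0) \<in> Rbarplus N" using m by (auto simp: Rbarplus_def Rbar_def Rroots_def)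
  ultimately have "e m - eta_w N b v m \<le> e (Suc m) - eta_w N b v (Suc m)" by fastforce
  then show ?thesis using eta_w_Suc[OF m, of b v] by simp
qed

lemma X_mono_adj: "\<forall>m. 1 \<le> m \<and> m < N \<longrightarrow> e m \<le> e (Suc m)"
  using X_eta_step by (smt (verit))

lemma X_mono: "1 \<le> i \<Longrightarrow> i \<le> j \<Longrightarrow> j \<le> N \<Longrightarrow> e i \<le> e j"
  using mono_chain[OF X_mono_adj] by blast

lemma X_step:
  assumes m: "1 \<le> m" "m < N" "e m = e (Suc m)"
  shows "prec b (inv v m) (inv v (Suc m))"
proof -
  let ?P = "inv v m" and ?Q = "inv v (Suc m)"
  have nM: "\<not> Mc N b v m" using X_eta_step[OF m(1,2)] m(3) by (auto split: if_splits)
  have r: "?P \<in> {1..N}" "?Q \<in> {1..N}" using m permutes_in_image[OF permutes_inv[OF X_perm], of m]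
    permutes_in_image[OF permutes_inv[OF X_perm], of "Suc m"] by simp_all
  have vPQ: "v ?P = m" "v ?Q = Suc m" using permutes_inverses(1)[OF X_perm] by auto
  have ne: "?P \<noteq> ?Q" using vPQ by (metis n_not_Suc_n)
  show ?thesis
  proof (cases "sameblock b ?P ?Q")
    case True
    have "\<not> ?Q < ?P"
    proof
      assume "?Q < ?P"
      moreover have "sameblock b ?Q ?P" using True sameblock_iff[OF b] by auto
      ultimately have "v ?Q < v ?P" by (rule X_inc)
      then show False using vPQ by simp
    qed
    then have "?P < ?Q" using ne by simp
    then show ?thesis using True sameblock_iff[OF b] by (auto simp: prec_def)
  next
    case False
    then have "\<not> ?P < ?Q" using nM X_Mc[OF m(1,2)] by auto
    then have "?Q < ?P" using ne by simp
    then have "blk b ?Q \<le> blk b ?P" by (simp add: blk_mono)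
    moreover have "blk b ?Q \<noteq> blk b ?P" using False sameblock_iff[OF b] r by auto
    ultimately show ?thesis by (simp add: prec_def)
  qed
qed

lemma X_chain:
  assumes "1 \<le> a" "c \<le> N" "e a = e c"
  shows "a < c \<Longrightarrow> prec b (inv v a) (inv v c)"
  using assms(2,3)
proof (induction c)
  case 0 then show ?case by simp
next
  case (Suc c)
  have ac: "a \<le> c" using Suc.prems by simp
  have ec: "e a \<le> e c" "e c \<le> e (Suc c)"
    using X_mono[OF assms(1) ac] X_mono[of c "Suc c"] assms(1) ac Suc.prems by auto
  then have ec2: "e c = e (Suc c)" "e a = e c" using Suc.prems by auto
  have st: "prec b (inv v c) (inv v (Suc c))" using X_step[OF _ _ ec2(1)] Suc.prems assms(1) by simp
  show ?case
  proof (cases "a = c")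
    case True then show ?thesis using st by simp
  next
    case False
    then have "prec b (inv v a) (inv v c)" using Suc ec2 by simp
    then show ?thesis using st prec_trans by blast
  qed
qed

lemma X_order:
  assumes "p \<in> {1..N}" "q \<in> {1..N}" "v p < v q"
  shows "e (v p) < e (v q) \<or> (e (v p) = e (v q) \<and> prec b p q)"
proof -
  have r: "v p \<in> {1..N}" "v q \<in> {1..N}" using assms(1,2) permutes_in_image[OF X_perm, of p]
    permutes_in_image[OF X_perm, of q] by simp_all
  have "e (v p) \<le> e (v q)" using X_mono r assms(3) by auto
  moreover have "prec b p q" if "e (v p) = e (v q)"
    using X_chain[of "v p" "v q"] that r assms(3) permutes_inverses(2)[OF X_perm] by auto
  ultimately show ?thesis by auto
qed

lemma X_betaof_adj:
  assumes m: "1 \<le> m" "m < N"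
  shows "sameblock (betaof N b (e, v)) m (Suc m) \<longleftrightarrow>
    sameblock b (inv v m) (inv v (Suc m)) \<and> e m = e (Suc m)"
proof -
  have vi: "v (inv v m) = m" "v (inv v (Suc m)) = Suc m" using permutes_inverses(1)[OF X_perm] by auto
  have r: "inv v m \<in> {1..N}" "inv v (Suc m) \<in> {1..N}"
    using m permutes_in_image[OF permutes_inv[OF X_perm], of m]
    permutes_in_image[OF permutes_inv[OF X_perm], of "Suc m"] by simp_all
  have "(m, Suc m, 0) \<in> ract (e, v) ` Rbar_gplus N b \<longleftrightarrow>
    sameblock b (inv v m) (inv v (Suc m)) \<and> e m = e (Suc m)"
  proof
    assume "(m, Suc m, 0) \<in> ract (e, v) ` Rbar_gplus N b"
    then obtain i j k where ijk: "(i, j, k) \<in> Rbar_gplus N b"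
      "(m, Suc m, 0) = ract (e, v) (i, j, k)" by (metis imageE prod_cases3)
    then have eq: "v i = m" "v j = Suc m" "k - (e (v i) - e (v j)) = 0" "k = 0" and sb: "sameblock b i j"
      by (auto simp: ract_def Rbar_gplus_def Rbar_g_def Rbar_def)
    have "inv v m = i" using eq(1) permutes_inverses(2)[OF X_perm, of i] by simp
    moreover have "inv v (Suc m) = j" using eq(2) permutes_inverses(2)[OF X_perm, of j] by simp
    ultimately show "sameblock b (inv v m) (inv v (Suc m)) \<and> e m = e (Suc m)" using eq sb by auto
  next
    assume a: "sameblock b (inv v m) (inv v (Suc m)) \<and> e m = e (Suc m)"
    have "\<not> inv v (Suc m) < inv v m"
    proof
      assume "inv v (Suc m) < inv v m"
      moreover have "sameblock b (inv v (Suc m)) (inv v m)" using a sameblock_iff[OF b] by auto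
      ultimately have "v (inv v (Suc m)) < v (inv v m)" by (rule X_inc)
      then show False using vi by simp
    qed
    moreover have "inv v (Suc m) \<noteq> inv v m" using vi by (metis n_not_Suc_n)
    ultimately have lt: "inv v m < inv v (Suc m)" by simp
    have "(inv v m, inv v (Suc m), 0) \<in> Rbar_gplus N b"
      using a r lt by (auto simp: Rbar_gplus_def Rbar_g_def Rbar_def Rroots_def Rbarplus_def)
    moreover have "ract (e, v) (inv v m, inv v (Suc m), 0) = (m, Suc m, 0)"
      using vi a by (simp add: ract_def)
    ultimately show "(m, Suc m, 0) \<in> ract (e, v) ` Rbar_gplus N b" by (metis image_eqI)
  qed
  then show ?thesis using betaof_adj[OF m] by simp
qed

end




lemma wmult_emb_left: "wmult (emb u) (e, v) = (wact u e, u \<circ> v)"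
  by (simp add: wmult_def emb_def)

lemma wact_at: "u permutes S \<Longrightarrow> wact u e (u x) = e x"
  by (simp add: wact_def permutes_inverses(2))

lemma rank_card:
  fixes v :: "nat \<Rightarrow> nat" and N p :: nat
  assumes v: "v permutes {1..N}" and p: "p \<in> {1..N}"
  shows "card {q \<in> {1..N}. v q < v p} = v p - 1"
proof -
  have vp: "v p \<in> {1..N}" using permutes_in_image[OF v, of p] p by simp
  have "v ` {q \<in> {1..N}. v q < v p} = {1..<v p}"
  proof
    show "v ` {q \<in> {1..N}. v q < v p} \<subseteq> {1..<v p}"
    proof
      fix m assume "m \<in> v ` {q \<in> {1..N}. v q < v p}"
      then obtain q where q: "q \<in> {1..N}" "v q < v p" "m = v q" by blast
      have "v q \<in> {1..N}" using permutes_in_image[OF v, of q] q(1) by simp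
      then show "m \<in> {1..<v p}" using q by simp
    qed
    show "{1..<v p} \<subseteq> v ` {q \<in> {1..N}. v q < v p}"
    proof
      fix m assume m: "m \<in> {1..<v p}"
      then have mr: "m \<in> {1..N}" using vp by simp
      have "inv v m \<in> {1..N}" using permutes_in_image[OF permutes_inv[OF v], of m] mr by simp
      moreover have "v (inv v m) = m" using permutes_inverses(1)[OF v] .
      ultimately show "m \<in> v ` {q \<in> {1..N}. v q < v p}" using m by (metis (mono_tags, lifting) atLeastLessThan_iff image_eqI mem_Collect_eq)
    qed
  qed
  moreover have "inj_on v {q \<in> {1..N}. v q < v p}"
    using permutes_inj[OF v] by (rule inj_on_subset) simp
  ultimately have "card {q \<in> {1..N}. v q < v p} = card {1..<v p}"
    by (metis card_image)
  then show ?thesis by simp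
qed

lemma perm_eq_order:
  fixes v1 v2 :: "nat \<Rightarrow> nat" and N :: nat
  assumes v1: "v1 permutes {1..N}" and v2: "v2 permutes {1..N}"
    and o: "\<And>p q. p \<in> {1..N} \<Longrightarrow> q \<in> {1..N} \<Longrightarrow> v1 p < v1 q \<Longrightarrow> v2 p < v2 q"
  shows "v1 = v2"
proof
  fix p show "v1 p = v2 p"
  proof (cases "p \<in> {1..N}")
    case False
    then show ?thesis using permutes_not_in[OF v1] permutes_not_in[OF v2] by simp
  next
    case True
    have "{q \<in> {1..N}. v1 q < v1 p} = {q \<in> {1..N}. v2 q < v2 p}"
    proof (intro Collect_cong conj_cong refl iffI)
      fix q assume "q \<in> {1..N}" "v1 q < v1 p"
      then show "v2 q < v2 p" using o True by blast
    next
      fix q assume q: "q \<in> {1..N}" "v2 q < v2 p"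
      have "q \<noteq> p"
      proof
        assume "q = p" then show False using q(2) by simp
      qed
      then have "v1 q \<noteq> v1 p" using permutes_inj[OF v1] by (simp add: inj_eq)
      moreover have "\<not> v1 p < v1 q"
      proof
        assume "v1 p < v1 q" then have "v2 p < v2 q" using o True q(1) by blast
        then show False using q by simp
      qed
      ultimately show "v1 q < v1 p" by simp
    qed
    then have "v1 p - 1 = v2 p - 1" using rank_card[OF v1 True] rank_card[OF v2 True] by simp
    moreover have "v1 p \<ge> 1" "v2 p \<ge> 1"
      using permutes_in_image[OF v1, of p] permutes_in_image[OF v2, of p] True by simp_all
    ultimately show ?thesis by simp
  qed
qed

lemma rank_perm:
  fixes r :: "nat \<Rightarrow> nat \<Rightarrow> bool" and N :: nat
  assumes tr: "\<And>p q s. r p q \<Longrightarrow> r q s \<Longrightarrow> r p s" and irr: "\<And>p. \<not> r p p"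
    and tot: "\<And>p q. p \<in> {1..N} \<Longrightarrow> q \<in> {1..N} \<Longrightarrow> p \<noteq> q \<Longrightarrow> r p q \<or> r q p"
  defines "v \<equiv> \<lambda>p. if p \<in> {1..N} then Suc (card {q \<in> {1..N}. r q p}) else p"
  shows "v permutes {1..N}" and "\<And>p q. p \<in> {1..N} \<Longrightarrow> q \<in> {1..N} \<Longrightarrow> r p q \<Longrightarrow> v p < v q"
proof -
  show lt: "v p < v q" if "p \<in> {1..N}" "q \<in> {1..N}" "r p q" for p q
  proof -
    have "{s \<in> {1..N}. r s p} \<subset> {s \<in> {1..N}. r s q}"
      using that tr irr by blast
    then have "card {s \<in> {1..N}. r s p} < card {s \<in> {1..N}. r s q}"
      by (rule psubset_card_mono[rotated]) simp
    then show ?thesis using that by (simp add: v_def)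
  qed
  have inj: "inj_on v {1..N}"
  proof (rule inj_onI)
    fix p q assume pq: "p \<in> {1..N}" "q \<in> {1..N}" "v p = v q"
    show "p = q"
    proof (rule ccontr)
      assume "p \<noteq> q"
      then have "r p q \<or> r q p" using tot pq by blast
      then show False using lt pq by fastforce
    qed
  qed
  have sub: "v ` {1..N} \<subseteq> {1..N}"
  proof
    fix m assume "m \<in> v ` {1..N}"
    then obtain p where p: "p \<in> {1..N}" "m = v p" by blast
    have "{q \<in> {1..N}. r q p} \<subseteq> {1..N} - {p}" using irr by auto
    then have "card {q \<in> {1..N}. r q p} \<le> card ({1..N} - {p})" by (rule card_mono[rotated]) simp
    also have "\<dots> = N - 1" using p by simp
    finally have c: "card {q \<in> {1..N}. r q p} \<le> N - 1" .
    have "N \<ge> 1" using p by simp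
    then have "Suc (card {q \<in> {1..N}. r q p}) \<le> N" using c by linarith
    then show "m \<in> {1..N}" using p by (simp add: v_def)
  qed
  have "v ` {1..N} = {1..N}" using endo_inj_surj[OF _ sub inj] by simp
  then have "bij_betw v {1..N} {1..N}" using inj by (simp add: bij_betw_def)
  then show "v permutes {1..N}" by (rule bij_imp_permutes) (auto simp: v_def)
qed




lemma keyless_wact:
  assumes u: "u permutes S"
  shows "keyless (wact u e) (u \<circ> v) p q \<longleftrightarrow>
    e (v p) < e (v q) \<or> (e (v p) = e (v q) \<and> u (v p) < u (v q))"
  using wact_at[OF u, of e "v p"] wact_at[OF u, of e "v q"] by (simp add: keyless_def)

lemma sameblock_chain2:
  assumes g: "ordpart N g" and a: "a \<in> {1..N}" and "c \<le> N"
    and st: "\<And>m. a \<le> m \<Longrightarrow> m < c \<Longrightarrow> sameblock g m (Suc m)"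
  shows "a \<le> c \<Longrightarrow> sameblock g a c"
  using assms(3) st
proof (induction c)
  case 0 then show ?case using a by simp
next
  case (Suc c)
  show ?case
  proof (cases "a = Suc c")
    case True then show ?thesis using sameblock_iff[OF g] a by simp
  next
    case False
    then have ac: "a \<le> c" using Suc.prems by simp
    have s1: "sameblock g a c" using Suc.IH[OF ac] Suc.prems by simp
    have s2: "sameblock g c (Suc c)" using Suc.prems ac by simp
    show ?thesis using s1 s2 sameblock_iff[OF g] by auto
  qed
qed

lemma part1:
  assumes b: "ordpart N b" and X: "Xc N b e v" and y: "emb u \<in> Wbarsup N (betaof N b (e, v))"
  shows "(wact u e, u \<circ> v) \<in> Wsup N b"
proof -
  let ?g = "betaof N b (e, v)"
  have g: "ordpart N ?g" using betaof_spec by blast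
  have u: "u permutes {1..N}"
    and uadj: "\<forall>m. 1 \<le> m \<and> m < N \<and> sameblock ?g m (Suc m) \<longrightarrow> u m < u (Suc m)"
    using Wbarsup_char[OF g] y by auto
  have uinc: "u a < u c" if "a < c" "sameblock ?g a c" for a c
    using sameblock_chain[where R="\<lambda>a c. u a < u c", OF g uadj _ that] by simp
  have v: "v permutes {1..N}" using X_perm[OF b X] .
  have W: "(wact u e, u \<circ> v) \<in> Wgrp N"
  proof -
    have "\<forall>i. i \<notin> {1..N} \<longrightarrow> wact u e i = 0"
    proof (intro allI impI)
      fix i assume i: "i \<notin> {1..N}"
      then have "inv u i = i" using permutes_not_in[OF permutes_inv[OF u]] by blast
      then show "wact u e i = 0" using X_Pbar[OF b X i] by (simp add: wact_def)
    qed
    then have "wact u e \<in> Pbar N" by (simp add: Pbar_def)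
    moreover have "u \<circ> v \<in> Wbar N" using permutes_compose[OF v u] by (simp add: Wbar_def)
    ultimately show ?thesis by (simp add: Wgrp_def)
  qed
  have mono: "e i \<le> e j" if "1 \<le> i" "i \<le> j" "j \<le> N" for i j using X_mono[OF b X that] .
  show ?thesis
    unfolding Wsup_char[OF b W]
  proof (intro allI impI)
    fix p assume p: "1 \<le> p \<and> p < N \<and> sameblock b p (Suc p)"
    define a where "a = v p"
    define c where "c = v (Suc p)"
    have pr: "p \<in> {1..N}" "Suc p \<in> {1..N}" using p by auto
    have ac: "a < c" using X_inc[OF b X, of p "Suc p"] p unfolding a_def c_def by simp
    have ar: "a \<in> {1..N}" "c \<in> {1..N}"
      using permutes_in_image[OF v, of p] permutes_in_image[OF v, of "Suc p"] pr
      unfolding a_def c_def by simp_all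
    have ia: "inv v a = p" "inv v c = Suc p"
      using permutes_inverses(2)[OF v] unfolding a_def c_def by simp_all
    have eac: "e a \<le> e c" using mono ac ar by simp
    have "e a < e c \<or> (e a = e c \<and> u a < u c)"
    proof (cases "e a = e c")
      case False then show ?thesis using eac by simp
    next
      case True
      have bp: "blk b p = blk b (Suc p)" using p sameblock_iff[OF b] by auto
      have step: "sameblock ?g m (Suc m)" if m: "a \<le> m" "m < c" for m
      proof -
        have mr: "1 \<le> m" "m < N" using m ar by auto
        have e1: "e a \<le> e m" using mono[of a m] m ar by simp
        have e2: "e m \<le> e (Suc m)" using mono[of m "Suc m"] mr by simp
        have e3: "e (Suc m) \<le> e c" using mono[of "Suc m" c] m ar mr by simp
        have em: "e m = e (Suc m)" using e1 e2 e3 True by simp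
        have b1: "blk b (inv v (Suc m)) \<le> blk b (inv v m)"
          using prec_blk[OF X_step[OF b X mr em]] .
        have b2: "blk b (inv v m) \<le> blk b (inv v a)"
        proof (cases "a = m")
          case True then show ?thesis by simp
        next
          case False
          then have "a < m" using m by simp
          moreover have "e a = e m" using e1 e2 e3 True by simp
          ultimately show ?thesis using prec_blk[OF X_chain[OF b X _ _ _ \<open>a < m\<close>]] ar mr by simp
        qed
        have b3: "blk b (inv v c) \<le> blk b (inv v (Suc m))"
        proof (cases "Suc m = c")
          case True then show ?thesis by simp
        next
          case False
          then have "Suc m < c" using m by simp
          moreover have "e (Suc m) = e c" using e1 e2 e3 True by simp
          ultimately show ?thesis using prec_blk[OF X_chain[OF b X _ _ _ \<open>Suc m < c\<close>]] ar mr by simp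
        qed
        have "blk b (inv v m) = blk b (inv v (Suc m))" using b1 b2 b3 ia bp by simp
        moreover have "inv v m \<in> {1..N}" "inv v (Suc m) \<in> {1..N}"
          using permutes_in_image[OF permutes_inv[OF v], of m]
            permutes_in_image[OF permutes_inv[OF v], of "Suc m"] mr by simp_all
        ultimately have "sameblock b (inv v m) (inv v (Suc m))" using sameblock_iff[OF b] by simp
        then show ?thesis using X_betaof_adj[OF b X mr] em by simp
      qed
      have "sameblock ?g a c" using sameblock_chain2[OF g ar(1) _ step] ar ac by simp
      then have "u a < u c" using uinc ac by simp
      then show ?thesis using True by simp
    qed
    then show "keyless (wact u e) (u \<circ> v) p (Suc p)"
      unfolding keyless_wact[OF u] a_def c_def .
  qed
qed

lemma part_inj:
  assumes b: "ordpart N b" and X1: "Xc N b e1 v1" and X2: "Xc N b e2 v2"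
    and u1: "u1 permutes {1..N}" and u2: "u2 permutes {1..N}"
    and eq: "(wact u1 e1, u1 \<circ> v1) = (wact u2 e2, u2 \<circ> v2)"
  shows "e1 = e2 \<and> v1 = v2 \<and> u1 = u2"
proof -
  have v1: "v1 permutes {1..N}" using X_perm[OF b X1] .
  have v2: "v2 permutes {1..N}" using X_perm[OF b X2] .
  have eqw: "wact u1 e1 = wact u2 e2" and equ: "u1 \<circ> v1 = u2 \<circ> v2" using eq by auto
  have lam: "e1 (v1 p) = e2 (v2 p)" for p
  proof -
    have "e1 (v1 p) = wact u1 e1 (u1 (v1 p))" using wact_at[OF u1] by simp
    also have "\<dots> = wact u2 e2 (u2 (v2 p))" using eqw equ by (metis comp_apply)
    also have "\<dots> = e2 (v2 p)" using wact_at[OF u2] by simp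
    finally show ?thesis .
  qed
  have vv: "v1 = v2"
  proof (rule perm_eq_order[OF v1 v2])
    fix p q assume pq: "p \<in> {1..N}" "q \<in> {1..N}" "v1 p < v1 q"
    show "v2 p < v2 q"
    proof (rule ccontr)
      assume nl: "\<not> v2 p < v2 q"
      have "p \<noteq> q" using pq(3) by auto
      then have "v2 p \<noteq> v2 q" using permutes_inj[OF v2] by (simp add: inj_eq)
      then have "v2 q < v2 p" using nl by simp
      then have o2: "e2 (v2 q) < e2 (v2 p) \<or> (e2 (v2 q) = e2 (v2 p) \<and> prec b q p)"
        using X_order[OF b X2 pq(2) pq(1)] by simp
      have o1: "e1 (v1 p) < e1 (v1 q) \<or> (e1 (v1 p) = e1 (v1 q) \<and> prec b p q)"
        using X_order[OF b X1 pq] .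
      show False using o1 o2 lam[of p] lam[of q] prec_asym[of b p q] by auto
    qed
  qed
  have uu: "u1 = u2"
  proof
    fix j
    have "u1 j = (u1 \<circ> v1) (inv v1 j)" using permutes_inverses(1)[OF v1] by simp
    also have "\<dots> = (u2 \<circ> v2) (inv v1 j)" using equ by simp
    also have "\<dots> = u2 j" using vv permutes_inverses(1)[OF v2] by simp
    finally show "u1 j = u2 j" .
  qed
  have "e1 = e2"
  proof
    fix j
    have "e1 j = wact u1 e1 (u1 j)" using wact_at[OF u1] by simp
    also have "\<dots> = wact u2 e2 (u2 j)" using eqw uu by simp
    also have "\<dots> = e2 j" using wact_at[OF u2] by simp
    finally show "e1 j = e2 j" .
  qed
  then show ?thesis using vv uu by simp
qed




lemma part_surj:
  assumes b: "ordpart N b" and y: "(\<mu>, w) \<in> Wsup N b"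
  shows "\<exists>e v u. Xc N b e v \<and> emb u \<in> Wbarsup N (betaof N b (e, v)) \<and> (wact u e, u \<circ> v) = (\<mu>, w)"
proof -
  have W: "(\<mu>, w) \<in> Wgrp N" using y by (simp add: Wsup_def)
  have w: "w permutes {1..N}" and mu: "\<mu> \<in> Pbar N" using W by (auto simp: Wgrp_def Wbar_def)
  have adj: "\<forall>p. 1 \<le> p \<and> p < N \<and> sameblock b p (Suc p) \<longrightarrow> keyless \<mu> w p (Suc p)"
    using Wsup_char[OF b W] y by simp
  have kgen: "keyless \<mu> w p q" if "p < q" "sameblock b p q" for p q
    using sameblock_chain[where R="keyless \<mu> w", OF b adj keyless_trans that] .
  define lam where "lam p = \<mu> (w p)" for p
  define r where "r p q \<longleftrightarrow> lam p < lam q \<or> (lam p = lam q \<and> prec b p q)" for p q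
  have rtr: "r p q \<Longrightarrow> r q s \<Longrightarrow> r p s" for p q s
    unfolding r_def using prec_trans[of b p q s] by auto
  have rirr: "\<not> r p p" for p unfolding r_def prec_def by simp
  have rtot: "p \<in> {1..N} \<Longrightarrow> q \<in> {1..N} \<Longrightarrow> p \<noteq> q \<Longrightarrow> r p q \<or> r q p" for p q
    unfolding r_def using prec_total[of p q b] by auto
  define v where "v = (\<lambda>p. if p \<in> {1..N} then Suc (card {q \<in> {1..N}. r q p}) else p)"
  have v: "v permutes {1..N}" unfolding v_def by (rule rank_perm(1)[of r, OF rtr rirr rtot])
  have vr: "v p < v q" if "p \<in> {1..N}" "q \<in> {1..N}" "r p q" for p q
    unfolding v_def by (rule rank_perm(2)[of r, OF rtr rirr rtot that])
  have rv: "r P Q" if PQ: "P \<in> {1..N}" "Q \<in> {1..N}" "v P < v Q" for P Q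
  proof (rule ccontr)
    assume "\<not> r P Q"
    moreover have "P \<noteq> Q" using PQ(3) by auto
    ultimately have "r Q P" using rtot PQ by blast
    then have "v Q < v P" using vr PQ by blast
    then show False using PQ(3) by simp
  qed
  have common: "inv v m \<in> {1..N} \<and> inv v (Suc m) \<in> {1..N} \<and> r (inv v m) (inv v (Suc m))"
    if m: "1 \<le> m" "m < N" for m
  proof -
    have r1: "inv v m \<in> {1..N}" "inv v (Suc m) \<in> {1..N}"
      using permutes_in_image[OF permutes_inv[OF v], of m]
        permutes_in_image[OF permutes_inv[OF v], of "Suc m"] m by simp_all
    have "v (inv v m) = m" "v (inv v (Suc m)) = Suc m" using permutes_inverses(1)[OF v] by simp_all
    then have "r (inv v m) (inv v (Suc m))" using rv[OF r1] by simp
    then show ?thesis using r1 by simp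
  qed
  define e where "e j = (if j \<in> {1..N} then lam (inv v j) else 0)" for j
  have X: "Xc N b e v"
    unfolding Xc_def
  proof (intro conjI)
    show "v permutes {1..N}" by (rule v)
    show "\<forall>p. 1 \<le> p \<and> p < N \<and> sameblock b p (Suc p) \<longrightarrow> v p < v (Suc p)"
    proof (intro allI impI)
      fix p assume p: "1 \<le> p \<and> p < N \<and> sameblock b p (Suc p)"
      have "keyless \<mu> w p (Suc p)" using adj p by blast
      moreover have "blk b p = blk b (Suc p)" using p sameblock_iff[OF b] by auto
      ultimately have "r p (Suc p)" unfolding r_def keyless_def lam_def prec_def by auto
      then show "v p < v (Suc p)" using vr p by auto
    qed
    show "(\<lambda>i. e i - eta_w N b v i) \<in> Pminus N"
    proof -
      let ?\<eta> = "\<lambda>i. e i - eta_w N b v i"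
      have pb: "?\<eta> \<in> Pbar N" using eta_w_out by (auto simp: Pbar_def e_def)
      have st: "\<forall>m. 1 \<le> m \<and> m < N \<longrightarrow> ?\<eta> m \<le> ?\<eta> (Suc m)"
      proof (intro allI impI)
        fix m assume m: "1 \<le> m \<and> m < N"
        let ?P = "inv v m" and ?Q = "inv v (Suc m)"
        have c: "?P \<in> {1..N}" "?Q \<in> {1..N}" "r ?P ?Q" using common m by auto
        have em: "e m = lam ?P" "e (Suc m) = lam ?Q" using m by (simp_all add: e_def)
        have Mc: "Mc N b v m \<longleftrightarrow> ?P < ?Q \<and> \<not> sameblock b ?P ?Q"
          using M_char[OF v] m by (simp add: Mc_def)
        have "e m + (if Mc N b v m then 1 else 0) \<le> e (Suc m)"
        proof (cases "lam ?P < lam ?Q")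
          case True then show ?thesis using em by simp
        next
          case False
          then have eq: "lam ?P = lam ?Q" and pr: "prec b ?P ?Q" using c(3) unfolding r_def by auto
          have "\<not> Mc N b v m"
          proof
            assume "Mc N b v m"
            then have lt: "?P < ?Q" and ns: "\<not> sameblock b ?P ?Q" using Mc by auto
            have "blk b ?P \<le> blk b ?Q" using lt blk_mono by simp
            moreover have "blk b ?P \<noteq> blk b ?Q" using ns sameblock_iff[OF b] c by auto
            ultimately show False using pr lt unfolding prec_def by auto
          qed
          then show ?thesis using em eq by simp
        qed
        then show "?\<eta> m \<le> ?\<eta> (Suc m)" using eta_w_Suc[of m N b v] m by simp
      qed
      have "\<forall>(i, j, k) \<in> Rbarplus N. ?\<eta> i - ?\<eta> j \<le> 0"
      proof
        fix a assume "a \<in> Rbarplus N"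
        then obtain i j k where a: "a = (i, j, k)" "i < j" "1 \<le> i" "j \<le> N"
          by (auto simp: Rbarplus_def Rbar_def Rroots_def)
        have "?\<eta> i \<le> ?\<eta> j" using mono_chain[OF st, of i j] a by simp
        then show "case a of (i, j, k) \<Rightarrow> ?\<eta> i - ?\<eta> j \<le> 0" using a by simp
      qed
      then show ?thesis using pb by (simp add: Pminus_def)
    qed
  qed
  let ?g = "betaof N b (e, v)"
  have g: "ordpart N ?g" using betaof_spec by blast
  define u where "u = w \<circ> inv v"
  have u: "u permutes {1..N}" unfolding u_def by (rule permutes_compose[OF permutes_inv[OF v] w])
  have uW: "emb u \<in> Wbarsup N ?g"
    unfolding Wbarsup_char[OF g]
  proof (intro conjI allI impI)
    show "u permutes {1..N}" by (rule u)
    fix m assume m: "1 \<le> m \<and> m < N \<and> sameblock ?g m (Suc m)"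
    have h: "sameblock b (inv v m) (inv v (Suc m))" "e m = e (Suc m)"
      using X_betaof_adj[OF b X, of m] m by auto
    let ?P = "inv v m" and ?Q = "inv v (Suc m)"
    have c: "?P \<in> {1..N}" "?Q \<in> {1..N}" "r ?P ?Q" using common m by auto
    have eq: "lam ?P = lam ?Q" using h(2) m by (simp add: e_def)
    then have "prec b ?P ?Q" using c(3) unfolding r_def by simp
    moreover have "blk b ?P = blk b ?Q" using h(1) sameblock_iff[OF b] by auto
    ultimately have lt: "?P < ?Q" unfolding prec_def by simp
    have "keyless \<mu> w ?P ?Q" using kgen[OF lt h(1)] .
    then have "w ?P < w ?Q" using eq unfolding keyless_def lam_def by simp
    then show "u m < u (Suc m)" by (simp add: u_def)
  qed
  have uv: "u \<circ> v = w" unfolding u_def using permutes_inverses(2)[OF v] by (auto simp: fun_eq_iff)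
  have wa: "wact u e = \<mu>"
  proof
    fix j
    have "u (v (inv w j)) = j" unfolding u_def
      using permutes_inverses(2)[OF v] permutes_inverses(1)[OF w] by simp
    then have iu: "inv u j = v (inv w j)" using permutes_inverses(2)[OF u, of "v (inv w j)"] by simp
    show "wact u e j = \<mu> j"
    proof (cases "j \<in> {1..N}")
      case True
      have iw: "inv w j \<in> {1..N}" using permutes_in_image[OF permutes_inv[OF w], of j] True by simp
      then have "v (inv w j) \<in> {1..N}" using permutes_in_image[OF v, of "inv w j"] by simp
      then have "e (v (inv w j)) = lam (inv w j)"
        using permutes_inverses(2)[OF v] by (simp add: e_def)
      also have "\<dots> = \<mu> j" using permutes_inverses(1)[OF w] by (simp add: lam_def)
      finally show ?thesis using iu by (simp add: wact_def)
    next
      case False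
      have "inv w j = j" using permutes_not_in[OF permutes_inv[OF w] False] .
      moreover have "v j = j" using permutes_not_in[OF v False] .
      moreover have "\<mu> j = 0" using mu False by (simp add: Pbar_def)
      ultimately show ?thesis using iu False by (auto simp: wact_def e_def)
    qed
  qed
  show ?thesis using X uW uv wa by blast
qed

theorem corollary2p18:
  fixes N :: nat and b :: "nat list"
  assumes "N \<ge> 2" and "ordpart N b"
  shows "(\<forall>x \<in> Xset N b. (\<lambda>w. wmult w x) ` Wbarsup N (betaof N b x) \<subseteq> Wsup N b)
    \<and> bij_betw (\<lambda>(x, w). wmult w x) (SIGMA x : Xset N b. Wbarsup N (betaof N b x)) (Wsup N b)"
proof -
  have b: "ordpart N b" by (rule assms(2))
  have P1: "\<forall>x \<in> Xset N b. (\<lambda>w. wmult w x) ` Wbarsup N (betaof N b x) \<subseteq> Wsup N b"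
  proof (intro ballI subsetI)
    fix x y assume x: "x \<in> Xset N b" and "y \<in> (\<lambda>w. wmult w x) ` Wbarsup N (betaof N b x)"
    then obtain y0 where y0: "y0 \<in> Wbarsup N (betaof N b x)" "y = wmult y0 x" by blast
    obtain u where u: "y0 = emb u" using Wbarsup_emb[OF y0(1)] by blast
    obtain e v where ev: "x = (e, v)" by (cases x)
    then have X: "Xc N b e v" using x Xset_iff[OF b] by simp
    have "(wact u e, u \<circ> v) \<in> Wsup N b" using part1[OF b X] y0(1) u ev by simp
    then show "y \<in> Wsup N b" using y0(2) u ev wmult_emb_left by simp
  qed
  have props: "\<exists>e v u. z = ((e, v), emb u) \<and> Xc N b e v \<and> u permutes {1..N}"
    if z: "z \<in> (SIGMA x : Xset N b. Wbarsup N (betaof N b x))" for z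
  proof -
    obtain x y where xy: "z = (x, y)" by (cases z)
    obtain e v where ev: "x = (e, v)" by (cases x)
    have x: "x \<in> Xset N b" and y: "y \<in> Wbarsup N (betaof N b x)" using z xy by auto
    obtain u where u: "y = emb u" using Wbarsup_emb[OF y] by blast
    have X: "Xc N b e v" using x ev Xset_iff[OF b] by simp
    have g: "ordpart N (betaof N b x)" using betaof_spec by blast
    have "u permutes {1..N}" using Wbarsup_char[OF g] y u by simp
    then show ?thesis using xy ev u X by blast
  qed
  have inj: "inj_on (\<lambda>(x, w). wmult w x) (SIGMA x : Xset N b. Wbarsup N (betaof N b x))"
  proof (rule inj_onI)
    fix z1 z2
    assume z1: "z1 \<in> (SIGMA x : Xset N b. Wbarsup N (betaof N b x))"
      and z2: "z2 \<in> (SIGMA x : Xset N b. Wbarsup N (betaof N b x))"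
      and eq: "(\<lambda>(x, w). wmult w x) z1 = (\<lambda>(x, w). wmult w x) z2"
    obtain e1 v1 u1 where h1: "z1 = ((e1, v1), emb u1)" "Xc N b e1 v1" "u1 permutes {1..N}"
      using props[OF z1] by blast
    obtain e2 v2 u2 where h2: "z2 = ((e2, v2), emb u2)" "Xc N b e2 v2" "u2 permutes {1..N}"
      using props[OF z2] by blast
    have "(wact u1 e1, u1 \<circ> v1) = (wact u2 e2, u2 \<circ> v2)"
      using eq h1(1) h2(1) wmult_emb_left by simp
    then have "e1 = e2 \<and> v1 = v2 \<and> u1 = u2" using part_inj[OF b h1(2) h2(2) h1(3) h2(3)] by blast
    then show "z1 = z2" using h1(1) h2(1) by simp
  qed
  have img: "(\<lambda>(x, w). wmult w x) ` (SIGMA x : Xset N b. Wbarsup N (betaof N b x)) = Wsup N b"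
  proof
    show "(\<lambda>(x, w). wmult w x) ` (SIGMA x : Xset N b. Wbarsup N (betaof N b x)) \<subseteq> Wsup N b"
    proof
      fix y assume "y \<in> (\<lambda>(x, w). wmult w x) ` (SIGMA x : Xset N b. Wbarsup N (betaof N b x))"
      then obtain z where z: "z \<in> (SIGMA x : Xset N b. Wbarsup N (betaof N b x))"
        "y = (\<lambda>(x, w). wmult w x) z" by (rule imageE)
      obtain x w0 where xw: "z = (x, w0)" by (cases z)
      have x: "x \<in> Xset N b" and w0: "w0 \<in> Wbarsup N (betaof N b x)" using z(1) xw by auto
      have "wmult w0 x \<in> (\<lambda>w. wmult w x) ` Wbarsup N (betaof N b x)" using w0 by (rule imageI)
      moreover have "(\<lambda>w. wmult w x) ` Wbarsup N (betaof N b x) \<subseteq> Wsup N b" using P1 x by (rule bspec)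
      ultimately show "y \<in> Wsup N b" using z(2) xw by auto
    qed
    show "Wsup N b \<subseteq> (\<lambda>(x, w). wmult w x) ` (SIGMA x : Xset N b. Wbarsup N (betaof N b x))"
    proof
      fix y assume y: "y \<in> Wsup N b"
      obtain \<mu> w where yw: "y = (\<mu>, w)" by (cases y)
      then obtain e v u where h: "Xc N b e v" "emb u \<in> Wbarsup N (betaof N b (e, v))"
        "(wact u e, u \<circ> v) = (\<mu>, w)"
        using part_surj[OF b] y by blast
      have "((e, v), emb u) \<in> (SIGMA x : Xset N b. Wbarsup N (betaof N b x))"
        using h Xset_iff[OF b] by simp
      moreover have "y = (\<lambda>(x, w). wmult w x) ((e, v), emb u)"
        using h(3) yw wmult_emb_left by simp
      ultimately show "y \<in> (\<lambda>(x, w). wmult w x) ` (SIGMA x : Xset N b. Wbarsup N (betaof N b x))"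
        by (rule rev_image_eqI)
    qed
  qed
  show ?thesis using P1 inj img by (simp add: bij_betw_def)
qed


end
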